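(* Let $\mathcal F|\mathcal G$ be a biflag of $M$, let $s$ be the number of distinct flats different from $E$ among the flats $F$ of the biflats $F|G\in\mathcal F|\mathcal G$, and let $k\ge0$. (1) If $s+k>r$, then $x_{\mathcal F|\mathcal G}\,\gamma^k=0$ in $A_{M,M^\perp}$. (2) If $s+k=r$ and $\mathcal F$ is not initial, then $x_{\mathcal F|\mathcal G}\,\gamma^k=0$ in $A_{M,M^\perp}$. Here $\mathcal F$ is initial if its $s$ distinct flats different from $E$ have ranks exactly $1,2,\dots,s$ in $M$.
   Context: Let $M$ be a matroid with no loops and no coloops on the ground set $E=\{0,1,\dots,n\}$, of rank $r+1$; $M^\perp$ its dual. A biflat of $M$ is a pair $F|G$ where $F$ is a flat of $M$, $G$ is a flat of $M^\perp$, both are nonempty, they are not both equal to $E$, and $F\cup G=E$. Two biflats $F|G$, $F'|G'$ are compatible if ($F\subseteq F'$ and $G\supseteq G'$) or ($F\supseteq F'$ and $G\subseteq G'$). A biflag is a set of pairwise compatible biflats with $\bigcup_{F|G}(F\cap G)\neq E$. Conormal Chow ring: $S$ is the polynomial ring over $\mathbb R$ in variables $x_{F|G}$, one per biflat; $x_{\mathcal F|\mathcal G}=\prod_{F|G\in\mathcal F|\mathcal G}x_{F|G}$ for a set of biflats. For $i\in E$, $\gamma_i=\sum_{i\in F,\,F\neq E}x_{F|G}$, $\bar\gamma_i=\sum_{i\in G,\,G\neq E}x_{F|G}$. $I$ is generated by the $x_{\mathcal F|\mathcal G}$ for sets of biflats that are not biflags, $J$ by all $\gamma_i-\gamma_j$,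 $\bar\gamma_i-\bar\gamma_j$; $A_{M,M^\perp}=S/(I+J)$, and $\gamma$ is the common class of the $\gamma_i$. *)

theory Defs
  imports Complex_Main "HOL-Library.Poly_Mapping"
begin

definition matroid :: "'a set \<Rightarrow> ('a set \<Rightarrow> bool) \<Rightarrow> bool" where
  "matroid E indep \<longleftrightarrow> finite E \<and> indep {} \<and>
     (\<forall>A. indep A \<longrightarrow> A \<subseteq> E) \<and>
     (\<forall>A B. indep A \<and> B \<subseteq> A \<longrightarrow> indep B) \<and>
     (\<forall>A B. indep A \<and> indep B \<and> card A < card B \<longrightarrow> (\<exists>e\<in>B - A. indep (insert e A)))"

definition mrank :: "('a set \<Rightarrow> bool) \<Rightarrow> 'a set \<Rightarrow> nat" where
  "mrank indep A = Max {card I | I. I \<subseteq> A \<and> indep I}"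

definition flat_of_rank :: "'a set \<Rightarrow> ('a set \<Rightarrow> nat) \<Rightarrow> 'a set \<Rightarrow> bool" where
  "flat_of_rank E rk A \<longleftrightarrow> A \<subseteq> E \<and> (\<forall>e\<in>E - A. rk (insert e A) > rk A)"

definition mflat :: "'a set \<Rightarrow> ('a set \<Rightarrow> bool) \<Rightarrow> 'a set \<Rightarrow> bool" where
  "mflat E indep A = flat_of_rank E (mrank indep) A"

definition dual_rank :: "'a set \<Rightarrow> ('a set \<Rightarrow> bool) \<Rightarrow> 'a set \<Rightarrow> nat" where
  "dual_rank E indep A = card A + mrank indep (E - A) - mrank indep E"

definition dual_flat :: "'a set \<Rightarrow> ('a set \<Rightarrow> bool) \<Rightarrow> 'a set \<Rightarrow> bool" where
  "dual_flat E indep A = flat_of_rank E (dual_rank E indep) A"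

definition no_loops :: "'a set \<Rightarrow> ('a set \<Rightarrow> bool) \<Rightarrow> bool" where
  "no_loops E indep \<longleftrightarrow> (\<forall>e\<in>E. indep {e})"

definition no_coloops :: "'a set \<Rightarrow> ('a set \<Rightarrow> bool) \<Rightarrow> bool" where
  "no_coloops E indep \<longleftrightarrow> (\<forall>e\<in>E. mrank indep (E - {e}) = mrank indep E)"

type_synonym 'a biflat = "'a set \<times> 'a set"

definition biflat :: "'a set \<Rightarrow> ('a set \<Rightarrow> bool) \<Rightarrow> 'a biflat \<Rightarrow> bool" where
  "biflat E indep FG \<longleftrightarrow> (case FG of (F, G) \<Rightarrow>
      mflat E indep F \<and> dual_flat E indep G \<and> F \<noteq> {} \<and> G \<noteq> {} \<and>
      \<not> (F = E \<and> G = E) \<and> F \<union> G = E)"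

definition compatible :: "'a biflat \<Rightarrow> 'a biflat \<Rightarrow> bool" where
  "compatible FG FG' \<longleftrightarrow> (case FG of (F, G) \<Rightarrow> case FG' of (F', G') \<Rightarrow>
      (F \<subseteq> F' \<and> G \<supseteq> G') \<or> (F \<supseteq> F' \<and> G \<subseteq> G'))"

definition biflag :: "'a set \<Rightarrow> ('a set \<Rightarrow> bool) \<Rightarrow> 'a biflat set \<Rightarrow> bool" where
  "biflag E indep S \<longleftrightarrow> (\<forall>b\<in>S. biflat E indep b) \<and>
      (\<forall>b\<in>S. \<forall>b'\<in>S. compatible b b') \<and>
      (\<Union>(F, G)\<in>S. F \<inter> G) \<noteq> E"

text \<open>Polynomials over the reals in variables indexed by biflats: finitely supported
  functions from monomials (finitely supported exponent vectors) to coefficients.\<close>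
type_synonym 'a cpoly = "('a biflat \<Rightarrow>\<^sub>0 nat) \<Rightarrow>\<^sub>0 real"

definition var :: "'a biflat \<Rightarrow> 'a cpoly" where
  "var b = Poly_Mapping.single (Poly_Mapping.single b 1) 1"

definition xmon :: "'a biflat set \<Rightarrow> 'a cpoly" where
  "xmon S = (\<Prod>b\<in>S. var b)"

definition ideal_gen :: "'b::comm_ring_1 set \<Rightarrow> 'b set" where
  "ideal_gen G = {p. \<exists>A c. finite A \<and> A \<subseteq> G \<and> p = (\<Sum>g\<in>A. c g * g)}"

definition biflats_of :: "'a set \<Rightarrow> ('a set \<Rightarrow> bool) \<Rightarrow> 'a biflat set" where
  "biflats_of E indep = {b. biflat E indep b}"

definition gamma :: "'a set \<Rightarrow> ('a set \<Rightarrow> bool) \<Rightarrow> 'a \<Rightarrow> 'a cpoly" where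
  "gamma E indep i = (\<Sum>(F, G)\<in>{(F, G). biflat E indep (F, G) \<and> i \<in> F \<and> F \<noteq> E}. var (F, G))"

definition gamma_bar :: "'a set \<Rightarrow> ('a set \<Rightarrow> bool) \<Rightarrow> 'a \<Rightarrow> 'a cpoly" where
  "gamma_bar E indep i = (\<Sum>(F, G)\<in>{(F, G). biflat E indep (F, G) \<and> i \<in> G \<and> G \<noteq> E}. var (F, G))"

definition chow_relations :: "'a set \<Rightarrow> ('a set \<Rightarrow> bool) \<Rightarrow> 'a cpoly set" where
  "chow_relations E indep =
     {xmon S | S. S \<subseteq> biflats_of E indep \<and> \<not> biflag E indep S} \<union>
     {gamma E indep i - gamma E indep j | i j. i \<in> E \<and> j \<in> E} \<union>
     {gamma_bar E indep i - gamma_bar E indep j | i j. i \<in> E \<and> j \<in> E}"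

text \<open>p = 0 in A_{M,M^perp} = S/(I+J).\<close>
definition zero_in_chow :: "'a set \<Rightarrow> ('a set \<Rightarrow> bool) \<Rightarrow> 'a cpoly \<Rightarrow> bool" where
  "zero_in_chow E indep p \<longleftrightarrow> p \<in> ideal_gen (chow_relations E indep)"

definition proper_flats :: "'a set \<Rightarrow> 'a biflat set \<Rightarrow> 'a set set" where
  "proper_flats E S = {F. \<exists>G. (F, G) \<in> S \<and> F \<noteq> E}"

definition initial :: "'a set \<Rightarrow> ('a set \<Rightarrow> bool) \<Rightarrow> 'a biflat set \<Rightarrow> bool" where
  "initial E indep S \<longleftrightarrow> mrank indep ` proper_flats E S = {1..card (proper_flats E S)}"

end

theory Submission
  imports Defs
begin

lemma ig_zero: "0 \<in> ideal_gen G"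
  unfolding ideal_gen_def by (rule CollectI, rule exI[of _ "{}"], auto)

lemma ig_gen: "g \<in> G \<Longrightarrow> g \<in> ideal_gen G"
  unfolding ideal_gen_def by (rule CollectI, rule exI[of _ "{g}"], rule exI[of _ "\<lambda>_. 1"], auto)

lemma ig_mult: "p \<in> ideal_gen G \<Longrightarrow> q * p \<in> ideal_gen G"
proof -
  assume "p \<in> ideal_gen G"
  then obtain A c where A: "finite A" "A \<subseteq> G" "p = (\<Sum>g\<in>A. c g * g)"
    unfolding ideal_gen_def by blast
  have "q * p = (\<Sum>g\<in>A. (q * c g) * g)" unfolding A(3) sum_distrib_left
    by (rule sum.cong) (simp_all only: mult.assoc)
  then show ?thesis unfolding ideal_gen_def using A(1,2) by (intro CollectI exI conjI) 
qed
lemma ig_add: "p \<in> ideal_gen G \<Longrightarrow> q \<in> ideal_gen G \<Longrightarrow> p + q \<in> ideal_gen G"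
proof -
  assume "p \<in> ideal_gen G" "q \<in> ideal_gen G"
  then obtain A c B d where A: "finite A" "A \<subseteq> G" "p = (\<Sum>g\<in>A. c g * g)"
    and B: "finite B" "B \<subseteq> G" "q = (\<Sum>g\<in>B. d g * g)"
    unfolding ideal_gen_def by blast
  define e where "e g = (if g \<in> A then c g else 0) + (if g \<in> B then d g else 0)" for g
  have "(\<Sum>g\<in>A \<union> B. e g * g) = (\<Sum>g\<in>A \<union> B. (if g \<in> A then c g * g else 0))
        + (\<Sum>g\<in>A \<union> B. (if g \<in> B then d g * g else 0))"
    unfolding sum.distrib[symmetric] by (rule sum.cong) (auto simp: e_def distrib_right)
  also have "(\<Sum>g\<in>A \<union> B. (if g \<in> A then c g * g else 0)) = (\<Sum>g\<in>A. c g * g)"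
    using A(1) B(1) by (simp add: sum.If_cases Int_absorb1)
  also have "(\<Sum>g\<in>A \<union> B. (if g \<in> B then d g * g else 0)) = (\<Sum>g\<in>B. d g * g)"
    using A(1) B(1) by (simp add: sum.If_cases Int_absorb1)
  finally have "p + q = (\<Sum>g\<in>A \<union> B. e g * g)" using A B by simp
  then show ?thesis using A B unfolding ideal_gen_def by (intro CollectI exI conjI) auto
qed

lemma ig_sum: "finite I \<Longrightarrow> (\<forall>i\<in>I. f i \<in> ideal_gen G) \<Longrightarrow> sum f I \<in> ideal_gen G"
  by (induction I rule: finite_induct) (auto intro: ig_zero ig_add)

lemma mrank_fin:
  assumes "matroid E indep"
  shows "finite {card I | I. I \<subseteq> A \<and> indep I}"
proof -
  have sub: "\<And>I. indep I \<Longrightarrow> I \<subseteq> E" using assms unfolding matroid_def by auto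
  have "{card I | I. I \<subseteq> A \<and> indep I} \<subseteq> card ` Pow E"
  proof
    fix x assume "x \<in> {card I | I. I \<subseteq> A \<and> indep I}"
    then obtain I where "x = card I" "indep I" by auto
    then show "x \<in> card ` Pow E" using sub by auto
  qed
  moreover have "finite E" using assms unfolding matroid_def by auto
  ultimately show ?thesis using finite_subset by blast
qed

lemma mrank_ge:
  assumes "matroid E indep" "I \<subseteq> A" "indep I"
  shows "card I \<le> mrank indep A"
  unfolding mrank_def using mrank_fin[OF assms(1)] assms(2,3) by (intro Max_ge) auto

lemma mrank_mono:
  assumes "matroid E indep" "A \<subseteq> B"
  shows "mrank indep A \<le> mrank indep B"
  unfolding mrank_def
proof (rule Max_mono)
  show "{card I | I. I \<subseteq> A \<and> indep I} \<subseteq> {card I | I. I \<subseteq> B \<and> indep I}"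
  proof
    fix x assume "x \<in> {card I | I. I \<subseteq> A \<and> indep I}"
    then obtain I where "x = card I" "I \<subseteq> A" "indep I" by auto
    then show "x \<in> {card I | I. I \<subseteq> B \<and> indep I}" using assms(2) by auto
  qed
  have e: "indep {}" using assms(1) unfolding matroid_def by auto
  have "card {} \<in> {card I | I. I \<subseteq> A \<and> indep I}"
    apply (rule CollectI) apply (rule exI[of _ "{}"]) using e by auto
  then show "{card I | I. I \<subseteq> A \<and> indep I} \<noteq> {}" by auto
  show "finite {card I | I. I \<subseteq> B \<and> indep I}" by (rule mrank_fin[OF assms(1)])
qed

lemma flat_strict:
  assumes "matroid E indep" "mflat E indep F'" "F' \<subset> F" "F \<subseteq> E"
  shows "mrank indep F' < mrank indep F"
proof -
  obtain e where e: "e \<in> F" "e \<notin> F'" using assms(3) by blast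
  have "mrank indep (insert e F') > mrank indep F'"
    using assms(2,4) e unfolding mflat_def flat_of_rank_def by blast
  moreover have "mrank indep (insert e F') \<le> mrank indep F"
    using e assms(3) by (intro mrank_mono[OF assms(1)]) auto
  ultimately show ?thesis by simp
qed

lemma rank_pos:
  assumes "matroid E indep" "no_loops E indep" "F \<subseteq> E" "F \<noteq> {}"
  shows "1 \<le> mrank indep F"
proof -
  obtain e where "e \<in> F" using assms(4) by blast
  then have "card {e} \<le> mrank indep F" using assms(2,3) unfolding no_loops_def
    by (intro mrank_ge[OF assms(1)]) auto
  then show ?thesis by simp
qed

lemma biflat_sub: "biflat E indep (F, G) \<Longrightarrow> F \<subseteq> E \<and> G \<subseteq> E"
  unfolding biflat_def mflat_def dual_flat_def flat_of_rank_def by auto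

lemma biflats_fin:
  assumes "finite E"
  shows "finite {b. biflat E indep b}"
proof -
  have "{b. biflat E indep b} \<subseteq> Pow E \<times> Pow E" using biflat_sub by fastforce
  then show ?thesis using assms by (meson finite_Pow_iff finite_SigmaI finite_subset)
qed

lemma biflag_fin:
  assumes "finite E" "biflag E indep S"
  shows "finite S"
  using assms(2) biflats_fin[OF assms(1), of indep] unfolding biflag_def
  by (metis finite_subset mem_Collect_eq subsetI)

lemma PF_fin:
  assumes "finite S"
  shows "finite (proper_flats E S)"
proof -
  have "proper_flats E S \<subseteq> fst ` S" unfolding proper_flats_def by force
  then show ?thesis using assms finite_subset by blast
qed

lemma PF_chain:
  assumes "biflag E indep S" "F \<in> proper_flats E S" "F' \<in> proper_flats E S"
  shows "F \<subseteq> F' \<or> F' \<subseteq> F"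
proof -
  obtain G where G: "(F, G) \<in> S" using assms(2) unfolding proper_flats_def by auto
  obtain G' where G': "(F', G') \<in> S" using assms(3) unfolding proper_flats_def by auto
  have "compatible (F, G) (F', G')" using assms(1) G G' unfolding biflag_def by blast
  then show ?thesis unfolding compatible_def by auto
qed

lemma PF_props:
  assumes "biflag E indep S" "F \<in> proper_flats E S"
  shows "mflat E indep F \<and> F \<noteq> {} \<and> F \<subseteq> E \<and> F \<noteq> E"
proof -
  obtain G where G: "(F, G) \<in> S" "F \<noteq> E" using assms(2) unfolding proper_flats_def by auto
  have "biflat E indep (F, G)" using assms(1) G unfolding biflag_def by blast
  then have "mflat E indep F" "F \<noteq> {}" unfolding biflat_def by auto
  moreover have "F \<subseteq> E" using \<open>mflat E indep F\<close> unfolding mflat_def flat_of_rank_def by auto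
  ultimately show ?thesis using G by auto
qed

lemma E_flat: "mflat E indep E"
  unfolding mflat_def flat_of_rank_def by auto

lemma set_top:
  fixes a c :: nat
  assumes "insert a X = {1..Suc c}" "\<forall>x\<in>X. x < a"
  shows "X = {1..c}"
proof -
  have "Suc c \<in> insert a X" using assms(1) by simp
  moreover have "a \<le> Suc c" using assms(1) by (metis atLeastAtMost_iff insertI1)
  ultimately have a: "a = Suc c" using assms(2) by fastforce
  then have "a \<notin> X" using assms(2) by blast
  then have "X = {1..Suc c} - {a}" using assms(1) by blast
  then show ?thesis using a by auto
qed

lemma base_case:
  assumes M: "matroid E indep" and NL: "no_loops E indep" and R: "mrank indep E = r + 1"
    and bf: "biflag E indep S" and fE: "finite E"
  shows "card (proper_flats E S) \<le> r \<and> (card (proper_flats E S) = r \<longrightarrow> initial E indep S)"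
proof -
  let ?P = "proper_flats E S"
  have fin: "finite ?P" using PF_fin biflag_fin fE bf by blast
  have inj: "inj_on (mrank indep) ?P"
  proof (rule inj_onI)
    fix F F' assume FP: "F \<in> ?P" "F' \<in> ?P" and eq: "mrank indep F = mrank indep F'"
    show "F = F'"
    proof (rule ccontr)
      assume ne: "F \<noteq> F'"
      from PF_chain[OF bf FP] show False
      proof
        assume "F \<subseteq> F'"
        then have "mrank indep F < mrank indep F'"
          using ne PF_props[OF bf] FP by (intro flat_strict[OF M]) auto
        then show False using eq by simp
      next
        assume "F' \<subseteq> F"
        then have "mrank indep F' < mrank indep F"
          using ne PF_props[OF bf] FP by (intro flat_strict[OF M]) auto
        then show False using eq by simp
      qed
    qed
  qed
  have sub: "mrank indep ` ?P \<subseteq> {1..r}"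
  proof
    fix x assume "x \<in> mrank indep ` ?P"
    then obtain F where F: "F \<in> ?P" "x = mrank indep F" by blast
    have p: "mflat E indep F \<and> F \<noteq> {} \<and> F \<subseteq> E \<and> F \<noteq> E" using PF_props[OF bf F(1)] .
    have "1 \<le> x" using rank_pos[OF M NL] p F(2) by auto
    moreover have "x < r + 1" using flat_strict[OF M, of F E] p F(2) R by auto
    ultimately show "x \<in> {1..r}" by simp
  qed
  have c: "card ?P = card (mrank indep ` ?P)" using card_image[OF inj] by simp
  have "card (mrank indep ` ?P) \<le> r" using card_mono[OF _ sub] by simp
  moreover have "card ?P = r \<longrightarrow> initial E indep S"
  proof
    assume "card ?P = r"
    then have "mrank indep ` ?P = {1..r}" using card_subset_eq[OF _ sub] c by simp
    then show "initial E indep S" unfolding initial_def using \<open>card ?P = r\<close> by simp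
  qed
  ultimately show ?thesis using c by simp
qed

lemma main_ind:
  assumes M: "matroid E indep" and NL: "no_loops E indep" and R: "mrank indep E = r + 1"
    and fE: "finite E" and En: "E \<noteq> {}"
  shows "biflag E indep S \<Longrightarrow> i \<in> E \<Longrightarrow>
    (card (proper_flats E S) + k > r \<or> (card (proper_flats E S) + k = r \<and> \<not> initial E indep S))
    \<Longrightarrow> zero_in_chow E indep (xmon S * gamma E indep i ^ k)"
proof (induction k arbitrary: S i)
  case 0
  have "card (proper_flats E S) \<le> r \<and> (card (proper_flats E S) = r \<longrightarrow> initial E indep S)"
    using base_case[OF M NL R 0(1) fE] .
  then show ?case using 0(3) by auto
next
  case (Suc k)
  note bf = Suc.prems(1) and iE = Suc.prems(2) and cond = Suc.prems(3)
  let ?P = "proper_flats E S"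
  let ?g = "gamma E indep"
  have finS: "finite S" using biflag_fin[OF fE bf] .
  have finP: "finite ?P" using PF_fin[OF finS] .
  have U: "\<Union>?P \<noteq> E"
  proof (cases "?P = {}")
    case True then show ?thesis using En by simp
  next
    case False
    have "subset.chain UNIV ?P" unfolding subset.chain_def using PF_chain[OF bf] by blast
    then have "\<Union>?P \<in> ?P" using Union_in_chain[OF finP False] by blast
    then show ?thesis using PF_props[OF bf] by blast
  qed
  have "\<Union>?P \<subseteq> E" using PF_props[OF bf] by blast
  then obtain j where jE: "j \<in> E" and jP: "j \<notin> \<Union>?P" using U by blast
  define B where "B = {(F, G). biflat E indep (F, G) \<and> j \<in> F \<and> F \<noteq> E}"
  have finB: "finite B"
    using biflats_fin[OF fE, of indep] unfolding B_def by (rule finite_subset[rotated]) auto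
  have gj: "?g j = (\<Sum>b\<in>B. var b)" unfolding gamma_def B_def by (simp add: case_prod_eta)
  have notS: "b \<notin> S" if "b \<in> B" for b
  proof
    assume "b \<in> S"
    then show False using that jP unfolding B_def proper_flats_def by auto
  qed
  have xs: "xmon S * ?g j = (\<Sum>b\<in>B. xmon (insert b S))"
    unfolding gj sum_distrib_left xmon_def
    by (rule sum.cong) (auto simp: prod.insert[OF finS] notS mult.commute)
  have key: "zero_in_chow E indep (xmon (insert b S) * ?g i ^ k)" if bB: "b \<in> B" for b
  proof (cases "biflag E indep (insert b S)")
    case True
    obtain F G where b: "b = (F, G)" and bfl: "biflat E indep (F, G)" and jF: "j \<in> F" and FE: "F \<noteq> E"
      using bB unfolding B_def by auto
    have PFi: "proper_flats E (insert b S) = insert F ?P"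
      using b FE unfolding proper_flats_def by auto
    have FnP: "F \<notin> ?P" using jF jP by blast
    have cardi: "card (proper_flats E (insert b S)) = Suc (card ?P)"
      using PFi FnP finP by simp
    have below: "mrank indep F' < mrank indep F" if F'P: "F' \<in> ?P" for F'
    proof -
      have F'i: "F' \<in> proper_flats E (insert b S)" using PFi F'P by simp
      have Fi: "F \<in> proper_flats E (insert b S)" using PFi by simp
      have "\<not> F \<subseteq> F'" using jF jP F'P by blast
      then have "F' \<subseteq> F" using PF_chain[OF True Fi F'i] by blast
      then have "F' \<subset> F" using FnP F'P by blast
      then show ?thesis using PF_props[OF bf F'P] biflat_sub[OF bfl]
        by (intro flat_strict[OF M]) auto
    qed
    have ninit: "\<not> initial E indep (insert b S)" if ni: "\<not> initial E indep S"
    proof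
      assume init: "initial E indep (insert b S)"
      have h1: "mrank indep ` proper_flats E (insert b S) = {1..card (proper_flats E (insert b S))}"
        using init unfolding initial_def .
      have h2: "mrank indep ` proper_flats E (insert b S) = {1..Suc (card ?P)}"
        using h1 unfolding cardi .
      have h3: "insert (mrank indep F) (mrank indep ` ?P) = {1..Suc (card ?P)}"
        using h2 unfolding PFi image_insert .
      have h4: "\<forall>x\<in>mrank indep ` ?P. x < mrank indep F" using below by blast
      have h5: "mrank indep ` ?P = {1..card ?P}" using set_top[OF h3 h4] .
      have "mrank indep ` ?P \<noteq> {1..card ?P}" using ni unfolding initial_def .
      then show False using h5 by contradiction
    qed
    have "card (proper_flats E (insert b S)) + k > r \<or>
          (card (proper_flats E (insert b S)) + k = r \<and> \<not> initial E indep (insert b S))"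
      using cond cardi ninit by auto
    then show ?thesis using Suc.IH[OF True iE] by blast
  next
    case False
    have bS: "\<forall>b'\<in>S. biflat E indep b'" using conjunct1[OF bf[unfolded biflag_def]] .
    have bb: "biflat E indep b" using bB unfolding B_def by (cases b) auto
    have sub: "insert b S \<subseteq> biflats_of E indep"
      using bS bb unfolding biflats_of_def by auto
    have "xmon (insert b S) \<in> chow_relations E indep"
      unfolding chow_relations_def
      apply (rule UnI1, rule UnI1, rule CollectI, rule exI[of _ "insert b S"])
      using sub False by auto
    then have "?g i ^ k * xmon (insert b S) \<in> ideal_gen (chow_relations E indep)"
      by (intro ig_mult ig_gen)
    then show ?thesis unfolding zero_in_chow_def by (simp only: mult.commute)
  qed
  have eq: "xmon S * ?g i ^ Suc k = (?g i ^ k * xmon S) * (?g i - ?g j)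
          + (\<Sum>b\<in>B. xmon (insert b S) * ?g i ^ k)"
  proof -
    have "xmon S * ?g i ^ Suc k = (?g i ^ k * xmon S) * (?g i - ?g j) + ?g i ^ k * (xmon S * ?g j)"
      by (simp add: algebra_simps)
    also have "\<dots> = (?g i ^ k * xmon S) * (?g i - ?g j) + (\<Sum>b\<in>B. xmon (insert b S) * ?g i ^ k)"
      unfolding xs sum_distrib_left by (simp add: mult.commute)
    finally show ?thesis .
  qed
  have t1: "(?g i ^ k * xmon S) * (?g i - ?g j) \<in> ideal_gen (chow_relations E indep)"
  proof -
    have "?g i - ?g j \<in> chow_relations E indep"
      unfolding chow_relations_def
      apply (rule UnI1, rule UnI2, rule CollectI, rule exI[of _ i], rule exI[of _ j])
      using iE jE by auto
    then show ?thesis by (intro ig_mult ig_gen)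
  qed
  have t2: "(\<Sum>b\<in>B. xmon (insert b S) * ?g i ^ k) \<in> ideal_gen (chow_relations E indep)"
    using key finB unfolding zero_in_chow_def by (intro ig_sum) auto
  show ?case unfolding zero_in_chow_def eq using t1 t2 by (rule ig_add)
qed

theorem mainTheorem10:
  fixes n r k :: nat and indep :: "nat set \<Rightarrow> bool" and S :: "nat biflat set"
  defines "E \<equiv> {0..n}"
  assumes "matroid E indep"
    and "no_loops E indep" and "no_coloops E indep"
    and "mrank indep E = r + 1"
    and "biflag E indep S"
  shows "(card (proper_flats E S) + k > r \<longrightarrow>
            (\<forall>i\<in>E. zero_in_chow E indep (xmon S * gamma E indep i ^ k)))
       \<and> (card (proper_flats E S) + k = r \<and> \<not> initial E indep S \<longrightarrow>
            (\<forall>i\<in>E. zero_in_chow E indep (xmon S * gamma E indep i ^ k)))"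
proof -
  have fE: "finite E" and En: "E \<noteq> {}" unfolding E_def by auto
  show ?thesis proof (intro conjI impI ballI)
    fix i assume "r < card (proper_flats E S) + k" "i \<in> E"
    then show "zero_in_chow E indep (xmon S * gamma E indep i ^ k)"
      using main_ind[OF assms(2,3,5) fE En assms(6)] by blast
  next
    fix i assume "card (proper_flats E S) + k = r \<and> \<not> initial E indep S" "i \<in> E"
    then show "zero_in_chow E indep (xmon S * gamma E indep i ^ k)"
      using main_ind[OF assms(2,3,5) fE En assms(6)] by blast
  qed
qed

end
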